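(* Let $0\le q\in L_1^{loc}(\mathbb{R})$ and $p\in[1,\infty)$. If the equation $-y'(x)+q(x)y(x)=f(x)$, $x\in\mathbb{R}$, is correctly solvable in $L_p(\mathbb{R})$, then $\int_{-\infty}^{\infty}q(\xi)\,d\xi=\infty$.
   Context: A solution is an absolutely continuous function satisfying the equation a.e. The equation is correctly solvable in $L_p(\mathbb{R})$ if for every $f\in L_p(\mathbb{R})$ there is a unique solution $y\in L_p(\mathbb{R})$, and there is a constant $c(p)\in(0,\infty)$ with $\|y\|_p\le c(p)\|f\|_p$ for all $f\in L_p(\mathbb{R})$. *)

theory Defs
  imports "HOL-Analysis.Analysis"
begin

text \<open>Absolute continuity of y on the compact interval [a,b] (classical epsilon-delta
  definition with finite families of non-overlapping subintervals, given as pairs (s,t)).\<close>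
definition abs_cont_on :: "real \<Rightarrow> real \<Rightarrow> (real \<Rightarrow> real) \<Rightarrow> bool" where
  "abs_cont_on a b y \<longleftrightarrow>
     (\<forall>\<epsilon>>0. \<exists>\<delta>>0. \<forall>I :: (real \<times> real) set.
        finite I \<and> (\<forall>(s,t)\<in>I. a \<le> s \<and> s \<le> t \<and> t \<le> b) \<and>
        (\<forall>(s,t)\<in>I. \<forall>(s',t')\<in>I. (s,t) \<noteq> (s',t') \<longrightarrow> {s<..<t} \<inter> {s'<..<t'} = {}) \<and>
        (\<Sum>(s,t)\<in>I. t - s) < \<delta>
        \<longrightarrow> (\<Sum>(s,t)\<in>I. \<bar>y t - y s\<bar>) < \<epsilon>)"

text \<open>Absolutely continuous function on the real line: absolutely continuous on every
  compact interval.\<close>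
definition abs_cont :: "(real \<Rightarrow> real) \<Rightarrow> bool" where
  "abs_cont y \<longleftrightarrow> (\<forall>a b. abs_cont_on a b y)"

definition locally_integrable :: "(real \<Rightarrow> real) \<Rightarrow> bool" where
  "locally_integrable q \<longleftrightarrow> (\<forall>a b. set_integrable lebesgue {a..b} q)"

text \<open>Membership in L_p(R) and the L_p norm (1 <= p < infinity).\<close>
definition in_Lp :: "real \<Rightarrow> (real \<Rightarrow> real) \<Rightarrow> bool" where
  "in_Lp p f \<longleftrightarrow> f \<in> borel_measurable lebesgue \<and> integrable lebesgue (\<lambda>x. \<bar>f x\<bar> powr p)"

definition Lp_norm :: "real \<Rightarrow> (real \<Rightarrow> real) \<Rightarrow> real" where
  "Lp_norm p f = (\<integral>x. \<bar>f x\<bar> powr p \<partial>lebesgue) powr (1 / p)"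

text \<open>y is a solution of  -y'(x) + q(x) y(x) = f(x): y absolutely continuous and the
  equation holds almost everywhere.\<close>
definition is_solution :: "(real \<Rightarrow> real) \<Rightarrow> (real \<Rightarrow> real) \<Rightarrow> (real \<Rightarrow> real) \<Rightarrow> bool" where
  "is_solution q f y \<longleftrightarrow> abs_cont y \<and>
     (AE x in lebesgue. \<exists>d. (y has_real_derivative d) (at x) \<and> - d + q x * y x = f x)"

definition correctly_solvable :: "(real \<Rightarrow> real) \<Rightarrow> real \<Rightarrow> bool" where
  "correctly_solvable q p \<longleftrightarrow>
     (\<forall>f. in_Lp p f \<longrightarrow> (\<exists>!y. in_Lp p y \<and> is_solution q f y)) \<and>
     (\<exists>c>0. \<forall>f y. in_Lp p f \<longrightarrow> in_Lp p y \<longrightarrow> is_solution q f y \<longrightarrow>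
        Lp_norm p y \<le> c * Lp_norm p f)"

end

theory Submission
  imports Defs
begin
lemma ac_cont_on:
  assumes "abs_cont_on a b G"
  shows "continuous_on {a..b} G"
  unfolding continuous_on_iff
proof (intro ballI allI impI)
  fix x e :: real assume x: "x \<in> {a..b}" and e: "e > 0"
  obtain d where d: "d > 0" and H: "\<And>I :: (real \<times> real) set.
        finite I \<and> (\<forall>(s,t)\<in>I. a \<le> s \<and> s \<le> t \<and> t \<le> b) \<and>
        (\<forall>(s,t)\<in>I. \<forall>(s',t')\<in>I. (s,t) \<noteq> (s',t') \<longrightarrow> {s<..<t} \<inter> {s'<..<t'} = {}) \<and>
        (\<Sum>(s,t)\<in>I. t - s) < d
        \<Longrightarrow> (\<Sum>(s,t)\<in>I. \<bar>G t - G s\<bar>) < e"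
    using assms e unfolding abs_cont_on_def by meson
  show "\<exists>d>0. \<forall>x'\<in>{a..b}. dist x' x < d \<longrightarrow> dist (G x') (G x) < e"
  proof (intro exI[of _ d] conjI ballI impI d)
    fix x' assume x': "x' \<in> {a..b}" and dx: "dist x' x < d"
    have "(\<Sum>(s,t)\<in>{(min x x', max x x')}. \<bar>G t - G s\<bar>) < e"
      apply (rule H)
      using x x' dx by (auto simp: dist_real_def)
    then show "dist (G x') (G x) < e"
      by (auto simp: dist_real_def min_def max_def abs_minus_commute split: if_splits)
  qed
qed

lemma ac_cont_UNIV:
  assumes "abs_cont y"
  shows "continuous_on UNIV y"
proof -
  have "isCont y x" for x
  proof -
    have "continuous_on {x-1..x+1} y" using assms ac_cont_on unfolding abs_cont_def by blast
    then have "continuous_on {x-1<..<x+1} y"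
      by (rule continuous_on_subset) auto
    then show ?thesis
      using continuous_on_eq_continuous_at[of "{x-1<..<x+1}" y] by auto
  qed
  then show ?thesis by (simp add: continuous_at_imp_continuous_on)
qed

lemma ac_lip_comp:
  assumes ac: "abs_cont_on a b G" and L: "L > 0"
    and lip: "\<And>u v. \<bar>\<phi> u - \<phi> v\<bar> \<le> L * \<bar>u - v\<bar>"
  shows "abs_cont_on a b (\<lambda>x. \<phi> (G x))"
  unfolding abs_cont_on_def
proof (intro allI impI)
  fix e :: real assume e: "e > 0"
  then have "e / L > 0" using L by simp
  then obtain d where d: "d > 0" and H: "\<And>I :: (real \<times> real) set.
        finite I \<and> (\<forall>(s,t)\<in>I. a \<le> s \<and> s \<le> t \<and> t \<le> b) \<and>
        (\<forall>(s,t)\<in>I. \<forall>(s',t')\<in>I. (s,t) \<noteq> (s',t') \<longrightarrow> {s<..<t} \<inter> {s'<..<t'} = {}) \<and>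
        (\<Sum>(s,t)\<in>I. t - s) < d
        \<Longrightarrow> (\<Sum>(s,t)\<in>I. \<bar>G t - G s\<bar>) < e / L"
    using ac unfolding abs_cont_on_def by meson
  show "\<exists>d>0. \<forall>I :: (real \<times> real) set.
        finite I \<and> (\<forall>(s,t)\<in>I. a \<le> s \<and> s \<le> t \<and> t \<le> b) \<and>
        (\<forall>(s,t)\<in>I. \<forall>(s',t')\<in>I. (s,t) \<noteq> (s',t') \<longrightarrow> {s<..<t} \<inter> {s'<..<t'} = {}) \<and>
        (\<Sum>(s,t)\<in>I. t - s) < d
        \<longrightarrow> (\<Sum>(s,t)\<in>I. \<bar>\<phi> (G t) - \<phi> (G s)\<bar>) < e"
  proof (intro exI[of _ d] conjI allI impI d)
    fix I :: "(real \<times> real) set"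
    assume A: "finite I \<and> (\<forall>(s,t)\<in>I. a \<le> s \<and> s \<le> t \<and> t \<le> b) \<and>
        (\<forall>(s,t)\<in>I. \<forall>(s',t')\<in>I. (s,t) \<noteq> (s',t') \<longrightarrow> {s<..<t} \<inter> {s'<..<t'} = {}) \<and>
        (\<Sum>(s,t)\<in>I. t - s) < d"
    have "(\<Sum>(s,t)\<in>I. \<bar>\<phi> (G t) - \<phi> (G s)\<bar>) \<le> (\<Sum>(s,t)\<in>I. L * \<bar>G t - G s\<bar>)"
      by (rule sum_mono) (auto simp: lip)
    also have "\<dots> = L * (\<Sum>(s,t)\<in>I. \<bar>G t - G s\<bar>)"
      by (simp add: sum_distrib_left case_prod_unfold)
    also have "\<dots> < L * (e / L)"
      using H[OF A] L by (intro mult_strict_left_mono) auto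
    also have "\<dots> = e" using L by simp
    finally show "(\<Sum>(s,t)\<in>I. \<bar>\<phi> (G t) - \<phi> (G s)\<bar>) < e" .
  qed
qed

lemma ac_add_id:
  assumes ac: "abs_cont_on a b G"
  shows "abs_cont_on a b (\<lambda>x. G x + x)"
  unfolding abs_cont_on_def
proof (intro allI impI)
  fix e :: real assume e: "e > 0"
  then have "e / 2 > 0" by simp
  then obtain d where d: "d > 0" and H: "\<And>I :: (real \<times> real) set.
        finite I \<and> (\<forall>(s,t)\<in>I. a \<le> s \<and> s \<le> t \<and> t \<le> b) \<and>
        (\<forall>(s,t)\<in>I. \<forall>(s',t')\<in>I. (s,t) \<noteq> (s',t') \<longrightarrow> {s<..<t} \<inter> {s'<..<t'} = {}) \<and>
        (\<Sum>(s,t)\<in>I. t - s) < d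
        \<Longrightarrow> (\<Sum>(s,t)\<in>I. \<bar>G t - G s\<bar>) < e / 2"
    using ac unfolding abs_cont_on_def by meson
  show "\<exists>d>0. \<forall>I :: (real \<times> real) set.
        finite I \<and> (\<forall>(s,t)\<in>I. a \<le> s \<and> s \<le> t \<and> t \<le> b) \<and>
        (\<forall>(s,t)\<in>I. \<forall>(s',t')\<in>I. (s,t) \<noteq> (s',t') \<longrightarrow> {s<..<t} \<inter> {s'<..<t'} = {}) \<and>
        (\<Sum>(s,t)\<in>I. t - s) < d
        \<longrightarrow> (\<Sum>(s,t)\<in>I. \<bar>(G t + t) - (G s + s)\<bar>) < e"
  proof (intro exI[of _ "min d (e/2)"] conjI allI impI)
    show "min d (e/2) > 0" using d e by simp
    fix I :: "(real \<times> real) set"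
    assume A: "finite I \<and> (\<forall>(s,t)\<in>I. a \<le> s \<and> s \<le> t \<and> t \<le> b) \<and>
        (\<forall>(s,t)\<in>I. \<forall>(s',t')\<in>I. (s,t) \<noteq> (s',t') \<longrightarrow> {s<..<t} \<inter> {s'<..<t'} = {}) \<and>
        (\<Sum>(s,t)\<in>I. t - s) < min d (e/2)"
    have "(\<Sum>(s,t)\<in>I. \<bar>(G t + t) - (G s + s)\<bar>) \<le> (\<Sum>(s,t)\<in>I. \<bar>G t - G s\<bar> + (t - s))"
      by (rule sum_mono) (use A in auto)
    also have "\<dots> = (\<Sum>(s,t)\<in>I. \<bar>G t - G s\<bar>) + (\<Sum>(s,t)\<in>I. t - s)"
      by (simp add: sum.distrib case_prod_unfold)
    also have "\<dots> < e / 2 + e / 2"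
      using H[of I] A by (intro add_strict_mono) auto
    finally show "(\<Sum>(s,t)\<in>I. \<bar>(G t + t) - (G s + s)\<bar>) < e" by simp
  qed
qed

lemma component_interval:
  fixes C V :: "real set"
  assumes C: "C \<in> components V" and V: "V \<subseteq> {a<..<b}"
  shows "a \<le> Inf C" "Inf C \<le> Sup C" "Sup C \<le> b" "C \<subseteq> {Inf C..Sup C}" "{Inf C<..<Sup C} \<subseteq> C"
proof -
  have ne: "C \<noteq> {}" using C in_components_nonempty by blast
  have sub: "C \<subseteq> {a<..<b}" using C V in_components_subset by blast
  have bb: "bdd_below C" "bdd_above C" using sub by (auto intro!: bdd_belowI[where m=a] bdd_aboveI[where M=b])
  have iv: "is_interval C" using C in_components_connected is_interval_connected_1 by blast
  obtain z where z: "z \<in> C" using ne by blast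
  show "a \<le> Inf C" using ne sub by (intro cInf_greatest) auto
  show "Sup C \<le> b" using ne sub by (intro cSup_least) auto
  show "Inf C \<le> Sup C" using z bb by (meson cInf_lower cSup_upper order_trans)
  show "C \<subseteq> {Inf C..Sup C}" using bb by (auto intro: cInf_lower cSup_upper)
  show "{Inf C<..<Sup C} \<subseteq> C"
  proof
    fix w assume w: "w \<in> {Inf C<..<Sup C}"
    obtain u where u: "u \<in> C" "u < w" using w ne bb by (meson cInf_less_iff greaterThanLessThan_iff)
    obtain v where v: "v \<in> C" "w < v" using w ne bb by (meson less_cSup_iff greaterThanLessThan_iff)
    show "w \<in> C" using iv u v unfolding is_interval_1 by (meson less_imp_le)
  qed
qed

lemma luzin_N:
  assumes ac: "abs_cont_on a b G" and N: "negligible N" and Nsub: "N \<subseteq> {a<..<b}"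
  shows "negligible (G ` N)"
  unfolding negligible_outer_le
proof (intro allI impI)
  fix e :: real assume e: "e > 0"
  have cont: "continuous_on {a..b} G" using ac ac_cont_on by blast
  obtain d where d: "d > 0" and H: "\<And>I :: (real \<times> real) set.
        finite I \<and> (\<forall>(s,t)\<in>I. a \<le> s \<and> s \<le> t \<and> t \<le> b) \<and>
        (\<forall>(s,t)\<in>I. \<forall>(s',t')\<in>I. (s,t) \<noteq> (s',t') \<longrightarrow> {s<..<t} \<inter> {s'<..<t'} = {}) \<and>
        (\<Sum>(s,t)\<in>I. t - s) < d
        \<Longrightarrow> (\<Sum>(s,t)\<in>I. \<bar>G t - G s\<bar>) < e"
    using ac e unfolding abs_cont_on_def by meson
  have Nl: "N \<in> sets lebesgue" using N negligible_imp_sets by blast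
  obtain U where U: "open U" "N \<subseteq> U" "(U - N) \<in> lmeasurable" "emeasure lebesgue (U - N) < ennreal d"
    using sets_lebesgue_outer_open[OF Nl d] by blast
  define V where "V = U \<inter> {a<..<b}"
  have Vopen: "open V" using U(1) by (simp add: V_def open_Int)
  have NV: "N \<subseteq> V" using U(2) Nsub by (auto simp: V_def)
  have Vl: "V \<in> lmeasurable" using Vopen by (intro lmeasurable_open) (auto simp: V_def)
  have mUN: "measure lebesgue (U - N) < d"
    using U(3,4) by (simp add: emeasure_eq_measure2 ennreal_less_iff)
  have UNl: "(U - N) \<union> N \<in> lmeasurable"
    by (rule fmeasurable.Un[OF U(3) negligible_imp_measurable[OF N]])
  have "measure lebesgue V \<le> measure lebesgue ((U - N) \<union> N)"
    by (rule measure_mono_fmeasurable[OF _ _ UNl]) (use Vl in \<open>auto simp: V_def\<close>)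
  also have "\<dots> \<le> measure lebesgue (U - N) + measure lebesgue N"
    using U(3) N by (intro measure_Un_le) (auto simp: negligible_imp_sets)
  also have "\<dots> = measure lebesgue (U - N)" using N by (simp add: negligible_imp_measure0)
  finally have mV: "measure lebesgue V < d" using mUN by linarith
  define \<C> where "\<C> = components V"
  have Copen: "\<And>C. C \<in> \<C> \<Longrightarrow> open C" using Vopen open_components \<C>_def by blast
  have Cdisj: "pairwise disjnt \<C>"
    using pairwise_disjoint_components[of V] unfolding \<C>_def disjnt_def by simp
  have Ccount: "countable \<C>"
    using Copen Cdisj by (rule countable_disjoint_open_subsets)
  have Vsub: "V \<subseteq> {a<..<b}" by (auto simp: V_def)
  note ci = component_interval[OF _ Vsub, folded \<C>_def]
  have Cl: "C \<in> lmeasurable" if "C \<in> \<C>" for C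
  proof (rule lmeasurable_open)
    show "open C" using Copen that by blast
    have "C \<subseteq> {a..b}" using ci[OF that] by auto
    then show "bounded C" using bounded_subset compact_imp_bounded[OF compact_Icc] by blast
  qed
  have "\<forall>C\<in>\<C>. \<exists>m M. m \<in> {Inf C..Sup C} \<and> M \<in> {Inf C..Sup C} \<and>
           (\<forall>x\<in>{Inf C..Sup C}. G m \<le> G x \<and> G x \<le> G M)"
  proof
    fix C assume C: "C \<in> \<C>"
    have co: "continuous_on {Inf C..Sup C} G"
      by (rule continuous_on_subset[OF cont]) (use ci[OF C] in auto)
    have ne: "{Inf C..Sup C} \<noteq> {}" using ci(2)[OF C] by simp
    obtain m where m: "m \<in> {Inf C..Sup C}" "\<forall>x\<in>{Inf C..Sup C}. G m \<le> G x"
      using continuous_attains_inf[OF compact_Icc ne co] by blast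
    obtain M where M: "M \<in> {Inf C..Sup C}" "\<forall>x\<in>{Inf C..Sup C}. G x \<le> G M"
      using continuous_attains_sup[OF compact_Icc ne co] by blast
    show "\<exists>m M. m \<in> {Inf C..Sup C} \<and> M \<in> {Inf C..Sup C} \<and>
           (\<forall>x\<in>{Inf C..Sup C}. G m \<le> G x \<and> G x \<le> G M)"
      using m M by blast
  qed
  then obtain m M where mM: "\<And>C. C \<in> \<C> \<Longrightarrow> m C \<in> {Inf C..Sup C} \<and> M C \<in> {Inf C..Sup C} \<and>
           (\<forall>x\<in>{Inf C..Sup C}. G (m C) \<le> G x \<and> G x \<le> G (M C))"
    by metis
  define T where "T C = {G (m C)..G (M C)}" for C
  show "\<exists>T. G ` N \<subseteq> T \<and> T \<in> lmeasurable \<and> measure lebesgue T \<le> e"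
  proof (intro exI conjI)
    show "G ` N \<subseteq> (\<Union>C\<in>\<C>. T C)"
    proof
      fix v assume "v \<in> G ` N"
      then obtain x where x: "x \<in> N" "v = G x" by blast
      then have "x \<in> V" using NV by blast
      then obtain C where C: "C \<in> \<C>" "x \<in> C" unfolding \<C>_def using Union_components by blast
      then have "x \<in> {Inf C..Sup C}" using ci(4)[OF C(1)] by blast
      then show "v \<in> (\<Union>C\<in>\<C>. T C)" using mM[OF C(1)] C x by (auto simp: T_def)
    qed
    have Tl: "\<And>C. C \<in> \<C> \<Longrightarrow> T C \<in> fmeasurable lebesgue" by (simp add: T_def)
    have bound: "measure lebesgue (\<Union>C\<in>F. T C) \<le> e" if F: "F \<subseteq> \<C>" "finite F" for F
    proof -
      define F' where "F' = {C\<in>F. m C \<noteq> M C}"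
      define p where "p C = (min (m C) (M C), max (m C) (M C))" for C
      have fin': "finite F'" using F by (simp add: F'_def)
      have pin: "{fst (p C)<..<snd (p C)} \<subseteq> C" if "C \<in> \<C>" for C
      proof
        fix x assume x: "x \<in> {fst (p C)<..<snd (p C)}"
        have "x \<in> {Inf C<..<Sup C}" using x mM[OF that] by (auto simp: p_def min_def max_def split: if_splits)
        then show "x \<in> C" using ci(5)[OF that] by blast
      qed
      have pinj: "inj_on p F'"
      proof (rule inj_onI)
        fix C C' assume CC: "C \<in> F'" "C' \<in> F'" "p C = p C'"
        have lt: "fst (p C) < snd (p C)" using CC(1) by (auto simp: F'_def p_def min_def max_def)
        then obtain w where "w \<in> {fst (p C)<..<snd (p C)}" using dense by (metis greaterThanLessThan_iff)
        moreover have "C \<in> \<C>" "C' \<in> \<C>" using CC F by (auto simp: F'_def)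
        ultimately have "w \<in> C" "w \<in> C'" using pin[of C] pin[of C'] CC(3) by auto
        then show "C = C'" using Cdisj CC F unfolding pairwise_def disjnt_def F'_def by blast
      qed
      have "measure lebesgue (\<Union>C\<in>F. T C) \<le> (\<Sum>C\<in>F. measure lebesgue (T C))"
        using F Tl by (intro measure_UNION_le) auto
      also have "\<dots> = (\<Sum>C\<in>F. \<bar>G (M C) - G (m C)\<bar>)"
      proof (rule sum.cong)
        fix C assume "C \<in> F"
        then have "G (m C) \<le> G (M C)" using mM F by auto
        then show "measure lebesgue (T C) = \<bar>G (M C) - G (m C)\<bar>" by (simp add: T_def)
      qed simp
      also have "\<dots> = (\<Sum>C\<in>F'. \<bar>G (M C) - G (m C)\<bar>)"
        using F by (intro sum.mono_neutral_right) (auto simp: F'_def)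
      also have "\<dots> = (\<Sum>C\<in>F'. (case p C of (s,t) \<Rightarrow> \<bar>G t - G s\<bar>))"
        by (rule sum.cong) (auto simp: p_def min_def max_def abs_minus_commute)
      also have "\<dots> = (\<Sum>(s,t)\<in>p ` F'. \<bar>G t - G s\<bar>)"
        using pinj by (simp add: sum.reindex)
      also have "\<dots> < e"
      proof (rule H, intro conjI)
        show "finite (p ` F')" using fin' by simp
        show "\<forall>(s,t)\<in>p ` F'. a \<le> s \<and> s \<le> t \<and> t \<le> b"
        proof
          fix st assume "st \<in> p ` F'"
          then obtain C where C: "C \<in> F'" "st = p C" by blast
          then have C\<C>: "C \<in> \<C>" using F by (auto simp: F'_def)
          show "case st of (s,t) \<Rightarrow> a \<le> s \<and> s \<le> t \<and> t \<le> b"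
            using C mM[OF C\<C>] ci(1,3)[OF C\<C>] by (auto simp: p_def)
        qed
        show "\<forall>(s,t)\<in>p ` F'. \<forall>(s',t')\<in>p ` F'. (s,t) \<noteq> (s',t') \<longrightarrow> {s<..<t} \<inter> {s'<..<t'} = {}"
        proof -
          have key: "{fst (p C)<..<snd (p C)} \<inter> {fst (p C')<..<snd (p C')} = {}"
            if CC: "C \<in> F'" "C' \<in> F'" "p C \<noteq> p C'" for C C'
          proof -
            have CC': "C \<in> \<C>" "C' \<in> \<C>" using CC F by (auto simp: F'_def)
            have "C \<noteq> C'" using CC by blast
            then have "C \<inter> C' = {}" using Cdisj CC' unfolding pairwise_def disjnt_def by blast
            then show ?thesis using pin[OF CC'(1)] pin[OF CC'(2)] by blast
          qed
          { fix x y assume "x \<in> p ` F'" "y \<in> p ` F'" "x \<noteq> y"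
            then have "{fst x<..<snd x} \<inter> {fst y<..<snd y} = {}" using key by blast }
          then show ?thesis unfolding case_prod_unfold by simp
        qed
        have "(\<Sum>(s,t)\<in>p ` F'. t - s) = (\<Sum>C\<in>F'. snd (p C) - fst (p C))"
          using pinj by (simp add: sum.reindex case_prod_unfold)
        also have "\<dots> \<le> (\<Sum>C\<in>F'. measure lebesgue C)"
        proof (rule sum_mono)
          fix C assume "C \<in> F'"
          then have C\<C>: "C \<in> \<C>" using F by (auto simp: F'_def)
          have "snd (p C) - fst (p C) = measure lebesgue {fst (p C)<..<snd (p C)}"
            by (simp add: p_def)
          also have "\<dots> \<le> measure lebesgue C"
            using pin[OF C\<C>] Cl[OF C\<C>] by (intro measure_mono_fmeasurable) auto
          finally show "snd (p C) - fst (p C) \<le> measure lebesgue C" .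
        qed
        also have "\<dots> = measure lebesgue (\<Union>F')"
        proof (rule measure_Union'[symmetric])
          show "finite F'" using fin' .
          show "\<And>S. S \<in> F' \<Longrightarrow> S \<in> lmeasurable" using Cl F by (auto simp: F'_def)
          show "pairwise disjnt F'" using pairwise_subset[OF Cdisj, of F'] F unfolding F'_def by blast
        qed
        also have "\<dots> \<le> measure lebesgue V"
        proof (rule measure_mono_fmeasurable[OF _ _ Vl])
          show "\<Union>F' \<subseteq> V" using F by (fastforce simp: F'_def \<C>_def dest: in_components_subset)
          have "F' \<subseteq> sets lebesgue" using Cl F by (auto simp: F'_def)
          then show "\<Union>F' \<in> sets lebesgue" using fin' by (intro sets.finite_Union) auto
        qed
        finally show "(\<Sum>(s,t)\<in>p ` F'. t - s) < d" using mV by linarith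
      qed
      finally show ?thesis by linarith
    qed
    show "(\<Union>C\<in>\<C>. T C) \<in> lmeasurable"
      using Ccount Tl bound by (rule fmeasurable_UN_bound)
    show "measure lebesgue (\<Union>C\<in>\<C>. T C) \<le> e"
      using Ccount Tl bound by (rule measure_UN_bound)
  qed
qed

lemma image_measure_1d:
  fixes G g :: "real \<Rightarrow> real"
  assumes S: "S \<in> sets lebesgue"
    and der: "\<And>x. x \<in> S \<Longrightarrow> (G has_real_derivative g x) (at x within S)"
    and int: "(\<lambda>x. \<bar>g x\<bar>) integrable_on S"
  shows "G ` S \<in> lmeasurable \<and> measure lebesgue (G ` S) \<le> integral S (\<lambda>x. \<bar>g x\<bar>)"
proof -
  let ?lift = "vec :: real \<Rightarrow> real^1"
  let ?drop = "(\<lambda>x::real^1. x $ 1)"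
  have S': "?lift ` S \<in> sets lebesgue"
    by (auto intro: differentiable_image_in_sets_lebesgue [OF S] differentiable_vec)
  have "((\<lambda>x. vec (G (x $ 1))) has_derivative (*\<^sub>R) (g z)) (at (vec z) within ?lift ` S)"
    if "z \<in> S" for z
    using der [OF that]
    by (simp add: has_real_derivative_iff_has_vector_derivative has_vector_derivative_def has_derivative_vector_1)
  then have der': "\<And>x. x \<in> ?lift ` S \<Longrightarrow>
        (?lift \<circ> G \<circ> ?drop has_derivative (*\<^sub>R) (g (?drop x))) (at x within ?lift ` S)"
    by (auto simp: o_def)
  have det: "det (matrix ((*\<^sub>R) c :: real^1 \<Rightarrow> real^1)) = c" for c :: real
    by (simp add: det_1 matrix_def)
  have int': "(\<lambda>x. \<bar>det (matrix ((*\<^sub>R) (g (?drop x)) :: real^1 \<Rightarrow> real^1))\<bar>) integrable_on ?lift ` S"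
  proof -
    have "((\<lambda>x. \<bar>g x\<bar>) has_integral integral S (\<lambda>x. \<bar>g x\<bar>)) S" using int by blast
    then have "((\<lambda>x. \<bar>g (?drop x)\<bar>) \<circ> vec has_integral integral S (\<lambda>x. \<bar>g x\<bar>)) (?drop ` ?lift ` S)"
      by (simp add: o_def image_image)
    then have "((\<lambda>x. \<bar>g (?drop x)\<bar>) has_integral integral S (\<lambda>x. \<bar>g x\<bar>)) (?lift ` S)"
      by (rule has_integral_vec1_D)
    then show ?thesis by (simp add: det integrable_on_def) blast
  qed
  have M: "(?lift \<circ> G \<circ> ?drop) ` ?lift ` S \<in> lmeasurable"
    and Mle: "measure lebesgue ((?lift \<circ> G \<circ> ?drop) ` ?lift ` S) \<le> integral (?lift ` S) (\<lambda>x. \<bar>det (matrix ((*\<^sub>R) (g (?drop x)) :: real^1 \<Rightarrow> real^1))\<bar>)"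
    using measurable_differentiable_image[OF S' der' int'] measure_differentiable_image[OF S' der' int'] by auto
  have eqim: "(?lift \<circ> G \<circ> ?drop) ` ?lift ` S = ?lift ` (G ` S)"
    by (auto simp: image_image)
  have eqint: "integral (?lift ` S) (\<lambda>x. \<bar>det (matrix ((*\<^sub>R) (g (?drop x)) :: real^1 \<Rightarrow> real^1))\<bar>)
      = integral S (\<lambda>x. \<bar>g x\<bar>)"
    by (simp add: det integral_vec1_eq o_def image_image)
  have "(\<lambda>x. 1::real) integrable_on ?lift ` (G ` S)" using M eqim lmeasurable_iff_integrable_on by metis
  then have I1: "((\<lambda>x. 1::real) has_integral integral (?lift ` (G ` S)) (\<lambda>x. 1)) (?lift ` (G ` S))" by blast
  have I2: "((\<lambda>x. 1::real) has_integral integral (?lift ` (G ` S)) (\<lambda>x. 1)) (G ` S)"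
    using has_integral_vec1_I[OF I1] by (simp add: o_def image_image)
  then have GS: "G ` S \<in> lmeasurable" using lmeasurable_iff_integrable_on by blast
  have "measure lebesgue (G ` S) = integral (?lift ` (G ` S)) (\<lambda>x. 1)"
    using lmeasure_integral[OF GS] I2 by (simp add: integral_unique)
  also have "\<dots> = measure lebesgue (?lift ` (G ` S))"
    using lmeasure_integral M eqim by metis
  finally show ?thesis using GS Mle eqim eqint by auto
qed

lemma deriv_measurable:
  fixes G g :: "real \<Rightarrow> real"
  assumes contG: "continuous_on UNIV G" and D: "D \<in> sets lebesgue"
    and der: "\<And>x. x \<in> D \<Longrightarrow> (G has_real_derivative g x) (at x)"
  shows "g \<in> borel_measurable (lebesgue_on D)"
proof -
  define \<phi> where "\<phi> i x = (G (x + 1 / real (Suc i)) - G x) / (1 / real (Suc i))" for i x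
  have "(\<lambda>x. if x \<in> D then g x else 0) \<in> borel_measurable lebesgue"
  proof (rule borel_measurable_LIMSEQ_real)
    show "(\<lambda>x. if x \<in> D then \<phi> i x else 0) \<in> borel_measurable lebesgue" for i
    proof (rule borel_measurable_if_I[OF _ D])
      have "continuous_on UNIV (\<phi> i)" unfolding \<phi>_def
        by (intro continuous_intros continuous_on_compose2[OF contG]) auto
      then show "\<phi> i \<in> borel_measurable (lebesgue_on D)"
        using continuous_imp_measurable_on_sets_lebesgue[OF _ D] continuous_on_subset by blast
    qed
    fix x
    show "(\<lambda>i. if x \<in> D then \<phi> i x else 0) \<longlonglongrightarrow> (if x \<in> D then g x else 0)"
    proof (cases "x \<in> D")
      case True
      have "((\<lambda>y. (G y - G x) / (y - x)) \<longlongrightarrow> g x) (at x)"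
        using der[OF True] by (simp add: has_field_derivative_iff)
      moreover have "(\<lambda>i. x + 1 / real (Suc i)) \<longlonglongrightarrow> x"
        using tendsto_add[OF tendsto_const[of x] LIMSEQ_inverse_real_of_nat] by (simp add: inverse_eq_divide)
      ultimately have "((\<lambda>y. (G y - G x) / (y - x)) \<circ> (\<lambda>i. x + 1 / real (Suc i))) \<longlonglongrightarrow> g x"
        unfolding tendsto_at_iff_sequentially by auto
      then show ?thesis using True by (simp add: \<phi>_def o_def)
    qed simp
  qed
  then show ?thesis using borel_measurable_if_D by blast
qed

lemma ac_bound:
  fixes G g h :: "real \<Rightarrow> real"
  assumes ac: "abs_cont_on a b G" and contG: "continuous_on UNIV G" and ab: "a \<le> b"
    and Dsub: "D \<subseteq> {a<..<b}" and Dneg: "negligible ({a..b} - D)"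
    and der: "\<And>x. x \<in> D \<Longrightarrow> (G has_real_derivative g x) (at x)"
    and hint: "h absolutely_integrable_on {a..b}"
    and hg: "\<And>x. x \<in> D \<Longrightarrow> g x \<le> h x"
    and h0: "\<And>x. x \<in> {a..b} \<Longrightarrow> 0 \<le> h x"
  shows "G b - G a \<le> integral {a..b} h"
proof -
  have Dl: "D \<in> sets lebesgue"
  proof -
    have "D = {a..b} - ({a..b} - D)" using Dsub by auto
    moreover have "{a..b} \<in> sets lebesgue" by simp
    moreover have "{a..b} - D \<in> sets lebesgue" using negligible_imp_sets[OF Dneg] .
    ultimately show ?thesis using sets.Diff[of "{a..b}" lebesgue "{a..b} - D"] by simp
  qed
  have gm: "g \<in> borel_measurable (lebesgue_on D)" using deriv_measurable[OF contG Dl der] .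
  have gm': "(\<lambda>x. if x \<in> D then g x else 0) \<in> borel_measurable lebesgue"
    using borel_measurable_if_I[OF gm Dl] .
  define S where "S = {x\<in>D. 0 \<le> g x}"
  have "{x \<in> space lebesgue. 0 \<le> (if x \<in> D then g x else 0)} \<in> sets lebesgue"
    using borel_measurable_le[OF borel_measurable_const gm'] by simp
  then have "D \<inter> {x. 0 \<le> (if x \<in> D then g x else 0)} \<in> sets lebesgue" using Dl by auto
  moreover have "S = D \<inter> {x. 0 \<le> (if x \<in> D then g x else 0)}" by (auto simp: S_def)
  ultimately have Sl: "S \<in> sets lebesgue" by simp
  have SD: "S \<subseteq> D" by (auto simp: S_def)
  have hS: "h integrable_on S"
  proof -
    have "h absolutely_integrable_on S"
    proof -
      have "S \<subseteq> {a..b}" using SD Dsub by auto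
      then show ?thesis using set_integrable_subset[OF hint Sl] by blast
    qed
    then show ?thesis using set_lebesgue_integral_eq_integral(1) by blast
  qed
  have hab: "h integrable_on {a..b}" using set_lebesgue_integral_eq_integral(1)[OF hint] .
  have gS: "(\<lambda>x. \<bar>g x\<bar>) integrable_on S"
  proof (rule measurable_bounded_by_integrable_imp_integrable_real[OF _ hS _ Sl])
    show "(\<lambda>x. \<bar>g x\<bar>) \<in> borel_measurable (lebesgue_on S)"
      using borel_measurable_abs[OF measurable_restrict_mono[OF gm SD]] .
    show "\<And>x. x \<in> S \<Longrightarrow> \<bar>\<bar>g x\<bar>\<bar> \<le> h x" using hg by (auto simp: S_def)
  qed
  have derS: "\<And>x. x \<in> S \<Longrightarrow> (G has_real_derivative g x) (at x within S)"
    using has_field_derivative_at_within[OF der] SD by blast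
  obtain GSl: "G ` S \<in> lmeasurable" and GSm: "measure lebesgue (G ` S) \<le> integral S (\<lambda>x. \<bar>g x\<bar>)"
    using image_measure_1d[OF Sl derS gS] by blast
  have "integral S (\<lambda>x. \<bar>g x\<bar>) \<le> integral S h"
  proof (rule integral_le[OF gS hS])
    fix x assume "x \<in> S" then show "\<bar>g x\<bar> \<le> h x" using hg by (simp add: S_def)
  qed
  also have "\<dots> \<le> integral {a..b} h"
  proof (rule integral_subset_le[OF _ hS hab])
    show "S \<subseteq> {a..b}" using SD Dsub by auto
    show "\<forall>x\<in>{a..b}. 0 \<le> h x" using h0 by blast
  qed
  finally have GSh: "measure lebesgue (G ` S) \<le> integral {a..b} h" using GSm by linarith
  have int0: "0 \<le> integral {a..b} h" using hab h0 by (intro integral_nonneg) auto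
  show ?thesis
  proof (cases "G b \<le> G a")
    case True then show ?thesis using int0 by linarith
  next
    case False
    define N1 where "N1 = ({a..b} - D) \<inter> {a<..<b}"
    have N1neg: "negligible (G ` N1)"
      using luzin_N[OF ac _ ] Dneg by (simp add: N1_def negligible_Int)
    have cont: "continuous_on {a..b} G" using continuous_on_subset[OF contG] by simp
    have cover: "{G a<..<G b} \<subseteq> G ` S \<union> G ` N1"
    proof
      fix v assume v: "v \<in> {G a<..<G b}"
      show "v \<in> G ` S \<union> G ` N1"
      proof (rule ccontr)
        assume nv: "v \<notin> G ` S \<union> G ` N1"
        define Z where "Z = {x\<in>{a..b}. G x = v}"
        have Zne: "Z \<noteq> {}"
          using IVT'[of G a v b] v ab cont by (auto simp: Z_def)
        have Zcl: "closed Z"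
          unfolding Z_def using continuous_closed_preimage_constant[OF cont closed_atLeastAtMost] by simp
        have Zbd: "bdd_above Z" by (auto simp: Z_def intro!: bdd_aboveI[where M=b])
        define x where "x = Sup Z"
        have xZ: "x \<in> Z" using closed_contains_Sup[OF Zne Zbd Zcl] by (simp add: x_def)
        have xge: "\<And>z. z \<in> Z \<Longrightarrow> z \<le> x" using Zbd by (simp add: x_def cSup_upper)
        have x1: "a \<le> x" "x \<le> b" "G x = v" using xZ by (auto simp: Z_def)
        moreover have "x \<noteq> a" "x \<noteq> b" using v x1(3) by auto
        ultimately have xab: "x \<in> {a<..<b}" by auto
        have xD: "x \<in> D"
        proof (rule ccontr)
          assume "x \<notin> D"
          then have "x \<in> N1" using xab by (auto simp: N1_def)
          then show False using nv xZ by (auto simp: Z_def)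
        qed
        have right: "G t > v" if t: "x < t" "t \<le> b" for t
        proof (rule ccontr)
          assume "\<not> G t > v"
          then have "G t \<le> v" by simp
          moreover have "v \<le> G b" using v by simp
          moreover have "continuous_on {t..b} G" by (rule continuous_on_subset[OF cont]) (use xab t in auto)
          ultimately obtain z where z: "t \<le> z" "z \<le> b" "G z = v"
            using IVT'[of G t v b] t by auto
          then have "z \<in> Z" using xab t by (auto simp: Z_def)
          then show False using xge z t by fastforce
        qed
        have "0 \<le> g x"
        proof -
          have lim: "((\<lambda>y. (G y - G x) / (y - x)) \<longlongrightarrow> g x) (at_right x)"
            using der[OF xD] unfolding has_field_derivative_iff by (rule tendsto_mono[OF at_le, rotated]) simp
          have ev: "eventually (\<lambda>y. 0 \<le> (G y - G x) / (y - x)) (at_right x)"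
            unfolding eventually_at_right_field
          proof (intro exI[of _ b] conjI allI impI)
            show "x < b" using xab by simp
            fix y assume "x < y" "y < b"
            then show "0 \<le> (G y - G x) / (y - x)"
              using right[of y] xZ by (auto simp: Z_def intro!: divide_nonneg_pos)
          qed
          show ?thesis using tendsto_lowerbound[OF lim ev] by simp
        qed
        then have "x \<in> S" using xD by (simp add: S_def)
        then show False using nv xZ by (auto simp: Z_def)
      qed
    qed
    have "G b - G a = measure lebesgue {G a<..<G b}" using False by simp
    also have "\<dots> \<le> measure lebesgue (G ` S \<union> G ` N1)"
      using cover GSl N1neg by (intro measure_mono_fmeasurable) (auto intro: fmeasurable.Un negligible_imp_measurable)
    also have "\<dots> \<le> measure lebesgue (G ` S) + measure lebesgue (G ` N1)"
      using GSl N1neg by (intro measure_Un_le) (auto simp: negligible_imp_sets)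
    also have "\<dots> = measure lebesgue (G ` S)" using N1neg by (simp add: negligible_imp_measure0)
    finally show ?thesis using GSh by linarith
  qed
qed

lemma ln_lip_aux:
  fixes A B c :: real
  assumes c: "c > 0" and A: "A \<ge> c" and B: "B \<ge> c" and AB: "B \<le> A"
  shows "ln A - ln B \<le> (A - B) / c"
proof -
  have Bp: "B > 0" using B c by linarith
  have "ln A - ln B = ln (A / B)" using Bp A c by (simp add: ln_div)
  also have "\<dots> \<le> A / B - 1" using Bp A c by (intro ln_le_minus_one) simp
  also have "\<dots> = (A - B) / B" using Bp by (simp add: field_simps)
  also have "\<dots> \<le> (A - B) / c" using AB B c by (intro divide_left_mono) auto
  finally show ?thesis .
qed

lemma ln_lip_abs:
  fixes A B c :: real
  assumes c: "c > 0" and A: "A \<ge> c" and B: "B \<ge> c"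
  shows "\<bar>ln A - ln B\<bar> \<le> \<bar>A - B\<bar> / c"
proof (cases "B \<le> A")
  case True
  have 1: "ln A - ln B \<le> (A - B) / c" by (rule ln_lip_aux[OF c A B True])
  have 2: "\<bar>A - B\<bar> = A - B" using True by simp
  have 3: "\<bar>ln A - ln B\<bar> = ln A - ln B" using True c A B by simp
  show ?thesis using 1 2 3 by simp
next
  case False
  then have le: "A \<le> B" by simp
  have 1: "ln B - ln A \<le> (B - A) / c" by (rule ln_lip_aux[OF c B A le])
  have 2: "\<bar>A - B\<bar> = B - A" using le by simp
  have 3: "\<bar>ln A - ln B\<bar> = ln B - ln A" using le c A B by simp
  show ?thesis using 1 2 3 by simp
qed

lemma ln_max_lip:
  fixes c u v :: real
  assumes c: "c > 0"
  shows "\<bar>ln (max c u) - ln (max c v)\<bar> \<le> (1 / c) * \<bar>u - v\<bar>"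
proof -
  have m: "\<bar>max c u - max c v\<bar> \<le> \<bar>u - v\<bar>" by (simp add: max_def)
  have "\<bar>ln (max c u) - ln (max c v)\<bar> \<le> \<bar>max c u - max c v\<bar> / c"
    by (rule ln_lip_abs[OF c]) auto
  also have "\<dots> \<le> \<bar>u - v\<bar> / c" using m c by (intro divide_right_mono) auto
  finally show ?thesis by simp
qed

lemma log_lower:
  fixes y y' q :: "real \<Rightarrow> real"
  assumes ac: "abs_cont y" and contY: "continuous_on UNIV y" and ab: "a \<le> b" and yb: "y b > 0"
    and Dsub: "D \<subseteq> {a<..<b}" and Dneg: "negligible ({a..b} - D)"
    and der: "\<And>x. x \<in> D \<Longrightarrow> (y has_real_derivative y' x) (at x)"
    and dq: "\<And>x. x \<in> D \<Longrightarrow> y x > 0 \<Longrightarrow> y' x \<le> q x * y x"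
    and qint: "q absolutely_integrable_on {a..b}" and q0: "\<And>x. x \<in> {a..b} \<Longrightarrow> 0 \<le> q x"
  shows "y a \<ge> y b * exp (- integral {a..b} q) / 2"
proof (rule ccontr)
  define I where "I = integral {a..b} q"
  define c where "c = y b * exp (- I) / 2"
  assume "\<not> y a \<ge> y b * exp (- integral {a..b} q) / 2"
  then have ya: "y a < c" by (simp add: c_def I_def)
  have qab: "q integrable_on {a..b}" using set_lebesgue_integral_eq_integral(1)[OF qint] .
  have I0: "0 \<le> I" unfolding I_def using qab q0 by (intro integral_nonneg) auto
  have c0: "c > 0" using yb by (simp add: c_def)
  have cyb: "c < y b"
  proof -
    have "exp (- I) \<le> 1" using I0 by simp
    then have "y b * exp (- I) \<le> y b" using yb by (simp add: mult_left_le)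
    then show ?thesis unfolding c_def using yb by linarith
  qed
  have cont: "continuous_on {a..b} y" using continuous_on_subset[OF contY] by simp
  define Z where "Z = {t\<in>{a..b}. y t \<le> c}"
  have Zne: "a \<in> Z" using ya ab by (simp add: Z_def)
  have Zcl: "closed Z"
  proof -
    have "closed {t\<in>{a..b}. y t \<in> {..c}}"
      using continuous_closed_preimage[OF cont closed_atLeastAtMost closed_atMost] by (simp add: vimage_def Int_def)
    then show ?thesis by (simp add: Z_def)
  qed
  have Zbd: "bdd_above Z" by (auto simp: Z_def intro!: bdd_aboveI[where M=b])
  define x0 where "x0 = Sup Z"
  have x0Z: "x0 \<in> Z" using closed_contains_Sup[OF _ Zbd Zcl] Zne by (auto simp: x0_def)
  have xge: "\<And>z. z \<in> Z \<Longrightarrow> z \<le> x0" using Zbd by (simp add: x0_def cSup_upper)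
  have x0ab: "a \<le> x0" "x0 \<le> b" "y x0 \<le> c" using x0Z by (auto simp: Z_def)
  have x0b: "x0 < b" using x0ab cyb by (metis le_less not_less)
  have right: "y t > c" if t: "x0 < t" "t \<le> b" for t
  proof (rule ccontr)
    assume "\<not> y t > c"
    then have "t \<in> Z" using t x0ab by (auto simp: Z_def)
    then show False using xge t by fastforce
  qed
  have yx0: "y x0 = c"
  proof -
    have "continuous_on {x0..b} y" by (rule continuous_on_subset[OF cont]) (use x0ab in auto)
    then obtain z where z: "x0 \<le> z" "z \<le> b" "y z = c"
      using IVT'[of y x0 c b] x0ab cyb x0b by auto
    then have "z \<in> Z" using x0ab by (auto simp: Z_def)
    then have "z = x0" using xge z by fastforce
    then show ?thesis using z by simp
  qed
  have ycge: "y t \<ge> c" if "t \<in> {x0..b}" for t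
    using that right[of t] yx0 by (cases "t = x0") auto
  define G where "G t = ln (max c (y t))" for t
  have acG: "abs_cont_on x0 b G"
  proof -
    have "abs_cont_on x0 b y" using ac unfolding abs_cont_def by blast
    then have "abs_cont_on x0 b (\<lambda>t. ln (max c (y t)))"
      by (rule ac_lip_comp[where L="1/c" and \<phi>="\<lambda>u. ln (max c u)"]) (use c0 ln_max_lip in auto)
    then show ?thesis unfolding G_def .
  qed
  have contG: "continuous_on UNIV G"
  proof -
    have m: "continuous_on UNIV (\<lambda>t. max c (y t))" by (intro continuous_intros contY)
    have "continuous_on UNIV (\<lambda>t. ln (max c (y t)))"
      by (rule continuous_on_ln[OF m]) (use c0 in auto)
    then show ?thesis unfolding G_def .
  qed
  define D' where "D' = D \<inter> {x0<..<b}"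
  have D'sub: "D' \<subseteq> {x0<..<b}" by (auto simp: D'_def)
  have D'neg: "negligible ({x0..b} - D')"
  proof -
    have "{x0..b} - D' \<subseteq> ({a..b} - D) \<union> {x0, b}" using x0ab by (auto simp: D'_def)
    moreover have "negligible (({a..b} - D) \<union> {x0, b})" using Dneg by simp
    ultimately show ?thesis using negligible_subset by blast
  qed
  have derG: "(G has_real_derivative (y' t / y t)) (at t)" if t: "t \<in> D'" for t
  proof -
    have tD: "t \<in> D" and tt: "x0 < t" "t < b" using t by (auto simp: D'_def)
    have yt: "y t > c" using right tt by simp
    have "((\<lambda>s. ln (y s)) has_real_derivative (1 / y t) * y' t) (at t)"
      using DERIV_chain2[OF DERIV_ln_divide der[OF tD]] yt c0 by simp
    then have "((\<lambda>s. ln (y s)) has_real_derivative y' t / y t) (at t)" by simp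
    then show ?thesis
    proof (rule has_field_derivative_transform_within_open[where S="{x0<..<b}"])
      show "open {x0<..<b}" by simp
      show "t \<in> {x0<..<b}" using tt by simp
      fix s assume "s \<in> {x0<..<b}"
      then have "y s > c" using right by simp
      then show "ln (y s) = G s" by (simp add: G_def)
    qed
  qed
  have qint': "q absolutely_integrable_on {x0..b}"
    using set_integrable_subset[OF qint] x0ab by auto
  have gq: "y' t / y t \<le> q t" if "t \<in> D'" for t
  proof -
    have tD: "t \<in> D" and tt: "x0 < t" "t < b" using that by (auto simp: D'_def)
    have yt: "y t > 0" using right tt c0 by force
    show ?thesis using dq[OF tD yt] yt by (simp add: divide_le_eq)
  qed
  have "G b - G x0 \<le> integral {x0..b} q"
    using ac_bound[OF acG contG x0ab(2) D'sub D'neg derG qint' gq] q0 x0ab by auto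
  also have "\<dots> \<le> I"
    unfolding I_def
  proof (rule integral_subset_le)
    show "{x0..b} \<subseteq> {a..b}" using x0ab by auto
    show "q integrable_on {x0..b}" using set_lebesgue_integral_eq_integral(1)[OF qint'] .
    show "q integrable_on {a..b}" using qab .
    show "\<forall>x\<in>{a..b}. 0 \<le> q x" using q0 by blast
  qed
  finally have "G b - G x0 \<le> I" .
  moreover have "G b = ln (y b)" using cyb by (simp add: G_def)
  moreover have "G x0 = ln c" using yx0 by (simp add: G_def)
  moreover have "ln c = ln (y b) - I - ln 2"
    using yb by (simp add: c_def ln_div ln_mult)
  ultimately show False by simp
qed

lemma not_Lp:
  fixes y :: "real \<Rightarrow> real"
  assumes int: "integrable lebesgue (\<lambda>x. \<bar>y x\<bar> powr p)" and p: "p > 0" and c: "c > 0"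
    and A: "A \<in> sets lebesgue" and Ainf: "emeasure lebesgue A = \<infinity>"
    and bound: "\<And>x. x \<in> A \<Longrightarrow> c \<le> \<bar>y x\<bar>"
  shows False
proof -
  have fin: "(\<integral>\<^sup>+ x. ennreal (\<bar>y x\<bar> powr p) \<partial>lebesgue) \<noteq> \<infinity>"
    using integrableD(2)[OF int] .
  have "(\<integral>\<^sup>+ x. ennreal (c powr p) * indicator A x \<partial>lebesgue) \<le> (\<integral>\<^sup>+ x. ennreal (\<bar>y x\<bar> powr p) \<partial>lebesgue)"
  proof (rule nn_integral_mono)
    fix x
    show "ennreal (c powr p) * indicator A x \<le> ennreal (\<bar>y x\<bar> powr p)"
    proof (cases "x \<in> A")
      case True
      have "c powr p \<le> \<bar>y x\<bar> powr p" by (rule powr_mono2) (use bound[OF True] c p in auto)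
      then have "ennreal (c powr p) \<le> ennreal (\<bar>y x\<bar> powr p)" by (rule ennreal_leI)
      then show ?thesis using True by simp
    qed simp
  qed
  moreover have "(\<integral>\<^sup>+ x. ennreal (c powr p) * indicator A x \<partial>lebesgue) = \<infinity>"
  proof -
    have cp: "ennreal (c powr p) \<noteq> 0" using c by simp
    have "(\<integral>\<^sup>+ x. ennreal (c powr p) * indicator A x \<partial>lebesgue) = ennreal (c powr p) * emeasure lebesgue A"
      using nn_integral_cmult_indicator[OF A] .
    also have "\<dots> = \<infinity>" using Ainf cp by (simp add: ennreal_mult_top)
    finally show ?thesis .
  qed
  ultimately have "\<infinity> \<le> (\<integral>\<^sup>+ x. ennreal (\<bar>y x\<bar> powr p) \<partial>lebesgue)" by metis
  then have "(\<integral>\<^sup>+ x. ennreal (\<bar>y x\<bar> powr p) \<partial>lebesgue) = \<infinity>" unfolding infinity_ennreal_def by (rule top_unique[THEN iffD1])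
  then show False using fin by contradiction
qed

lemma int_le_K:
  fixes q :: "real \<Rightarrow> real"
  assumes q0: "\<And>x. 0 \<le> q x" and qint: "set_integrable lebesgue {a..b} q"
    and fin: "(\<integral>\<^sup>+ x. ennreal (q x) \<partial>lebesgue) \<noteq> \<infinity>"
  shows "integral {a..b} q \<le> enn2real (\<integral>\<^sup>+ x. ennreal (q x) \<partial>lebesgue)"
proof -
  have "integral {a..b} q = (LINT x:{a..b}|lebesgue. q x)"
    using set_lebesgue_integral_eq_integral(2)[OF qint] by simp
  also have "\<dots> = integral\<^sup>L lebesgue (\<lambda>x. indicator {a..b} x *\<^sub>R q x)"
    by (simp add: set_lebesgue_integral_def)
  also have "\<dots> = enn2real (\<integral>\<^sup>+ x. ennreal (indicator {a..b} x *\<^sub>R q x) \<partial>lebesgue)"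
  proof (rule integral_eq_nn_integral)
    show "(\<lambda>x. indicator {a..b} x *\<^sub>R q x) \<in> borel_measurable lebesgue"
      using qint unfolding set_integrable_def by blast
    show "AE x in lebesgue. 0 \<le> indicator {a..b} x *\<^sub>R q x"
      by (rule AE_I2) (simp add: q0)
  qed
  also have "\<dots> \<le> enn2real (\<integral>\<^sup>+ x. ennreal (q x) \<partial>lebesgue)"
  proof (rule enn2real_mono)
    show "(\<integral>\<^sup>+ x. ennreal (indicator {a..b} x *\<^sub>R q x) \<partial>lebesgue) \<le> (\<integral>\<^sup>+ x. ennreal (q x) \<partial>lebesgue)"
    proof (rule nn_integral_mono)
      fix x show "ennreal (indicator {a..b} x *\<^sub>R q x) \<le> ennreal (q x)"
        by (cases "x \<in> {a..b}") (simp_all add: q0)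
    qed
    show "(\<integral>\<^sup>+ x. ennreal (q x) \<partial>lebesgue) < top" using fin by (simp add: less_top[symmetric])
  qed
  finally show ?thesis .
qed

lemma AE_negligible:
  assumes "AE x in lebesgue. P x"
  shows "negligible {x. \<not> P x}"
proof -
  obtain N where N: "N \<in> null_sets lebesgue" "{x \<in> space lebesgue. \<not> P x} \<subseteq> N"
    using assms[unfolded eventually_ae_filter] by blast
  then have "negligible N" using negligible_iff_null_sets[THEN iffD2] by blast
  moreover have "{x. \<not> P x} \<subseteq> N" using N(2) by simp
  ultimately show ?thesis using negligible_subset by blast
qed

lemma right_side:
  fixes y y' q :: "real \<Rightarrow> real"
  assumes ac: "abs_cont y" and contY: "continuous_on UNIV y" and y1: "y 1 \<le> -1"
    and Eneg: "negligible {x. x \<notin> E}"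
    and der: "\<And>t. t \<in> E \<Longrightarrow> t > 1 \<Longrightarrow> (y has_real_derivative y' t) (at t) \<and> y' t = q t * y t"
    and q0: "\<And>t. 0 \<le> q t" and X: "X \<ge> 1"
  shows "y X \<le> -1/2"
proof (rule ccontr)
  assume "\<not> y X \<le> -1/2"
  then have yX: "y X > -1/2" by simp
  have cont: "continuous_on {1..X} y" using continuous_on_subset[OF contY] by simp
  define Z where "Z = {t\<in>{1..X}. -1/2 \<le> y t}"
  have XZ: "X \<in> Z" using X yX by (simp add: Z_def)
  have Zcl: "closed Z"
  proof -
    have "closed {t\<in>{1..X}. y t \<in> {-1/2..}}"
      using continuous_closed_preimage[OF cont closed_atLeastAtMost closed_atLeast] by (simp add: vimage_def Int_def)
    then show ?thesis by (simp add: Z_def)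
  qed
  have Zbd: "bdd_below Z" by (auto simp: Z_def intro!: bdd_belowI[where m=1])
  define x1 where "x1 = Inf Z"
  have x1Z: "x1 \<in> Z" using closed_contains_Inf[OF _ Zbd Zcl] XZ by (auto simp: x1_def)
  have xle: "\<And>z. z \<in> Z \<Longrightarrow> x1 \<le> z" using Zbd by (simp add: x1_def cInf_lower)
  have x1ab: "1 \<le> x1" "x1 \<le> X" "-1/2 \<le> y x1" using x1Z by (auto simp: Z_def)
  have x1gt: "1 < x1"
  proof (rule ccontr)
    assume "\<not> 1 < x1" then have "x1 = 1" using x1ab by simp
    then show False using x1ab y1 by simp
  qed
  have left: "y t < -1/2" if t: "1 \<le> t" "t < x1" for t
  proof (rule ccontr)
    assume "\<not> y t < -1/2"
    then have "t \<in> Z" using t x1ab by (auto simp: Z_def)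
    then show False using xle t by fastforce
  qed
  have yx1: "y x1 = -1/2"
  proof -
    have "continuous_on {1..x1} y" by (rule continuous_on_subset[OF cont]) (use x1ab in auto)
    then obtain z where z: "1 \<le> z" "z \<le> x1" "y z = -1/2"
      using IVT'[of y 1 "-1/2" x1] x1ab y1 by auto
    then have "z \<in> Z" using x1ab by (auto simp: Z_def)
    then have "z = x1" using xle z by fastforce
    then show ?thesis using z by simp
  qed
  define c :: real where "c = 1/2"
  have c0: "c > 0" by (simp add: c_def)
  define G where "G t = - ln (max c (- y t))" for t
  have acG: "abs_cont_on 1 x1 G"
  proof -
    have "abs_cont_on 1 x1 y" using ac unfolding abs_cont_def by blast
    then have "abs_cont_on 1 x1 (\<lambda>t. - ln (max c (- y t)))"
    proof (rule ac_lip_comp[where L="1/c" and \<phi>="\<lambda>u. - ln (max c (- u))"])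
      show "0 < 1 / c" using c0 by simp
      fix u v :: real
      have "\<bar>ln (max c (- u)) - ln (max c (- v))\<bar> \<le> 1 / c * \<bar>- u - - v\<bar>" by (rule ln_max_lip[OF c0])
      then show "\<bar>- ln (max c (- u)) - - ln (max c (- v))\<bar> \<le> 1 / c * \<bar>u - v\<bar>" by (simp add: abs_minus_commute)
    qed
    then show ?thesis unfolding G_def .
  qed
  have contG: "continuous_on UNIV G"
  proof -
    have m: "continuous_on UNIV (\<lambda>t. max c (- y t))" by (intro continuous_intros contY)
    have "continuous_on UNIV (\<lambda>t. ln (max c (- y t)))"
      by (rule continuous_on_ln[OF m]) (use c0 in auto)
    then have "continuous_on UNIV (\<lambda>t. - ln (max c (- y t)))" by (rule continuous_on_minus)
    then show ?thesis unfolding G_def .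
  qed
  define D where "D = E \<inter> {1<..<x1}"
  have Dsub: "D \<subseteq> {1<..<x1}" by (auto simp: D_def)
  have Dneg: "negligible ({1..x1} - D)"
  proof -
    have "{1..x1} - D \<subseteq> {x. x \<notin> E} \<union> {1, x1}" by (auto simp: D_def)
    moreover have "negligible ({x. x \<notin> E} \<union> {1, x1})" using Eneg by simp
    ultimately show ?thesis using negligible_subset by blast
  qed
  have derG: "(G has_real_derivative (- q t)) (at t)" if t: "t \<in> D" for t
  proof -
    have tE: "t \<in> E" and tt: "1 < t" "t < x1" using t by (auto simp: D_def)
    have yt: "- y t > c" using left[of t] tt by (simp add: c_def)
    have dt: "(y has_real_derivative y' t) (at t)" "y' t = q t * y t" using der[OF tE tt(1)] by auto
    have dm: "((\<lambda>s. - y s) has_real_derivative - y' t) (at t)" using DERIV_minus[OF dt(1)] .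
    have pos: "0 < - y t" using yt c0 by simp
    have "((\<lambda>s. ln (- y s)) has_real_derivative (1 / (- y t)) * (- y' t)) (at t)"
      using DERIV_chain2[OF DERIV_ln_divide[OF pos] dm] .
    then have "((\<lambda>s. ln (- y s)) has_real_derivative (- y' t) / (- y t)) (at t)" by simp
    then have "((\<lambda>s. - ln (- y s)) has_real_derivative - ((- y' t) / (- y t))) (at t)"
      by (rule DERIV_minus)
    moreover have "- ((- y' t) / (- y t)) = - q t" using dt(2) yt c0 by (simp add: field_simps)
    ultimately have "((\<lambda>s. - ln (- y s)) has_real_derivative - q t) (at t)" by simp
    then show ?thesis
    proof (rule has_field_derivative_transform_within_open[where S="{1<..<x1}"])
      show "open {1<..<x1}" by simp
      show "t \<in> {1<..<x1}" using tt by simp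
      fix s assume "s \<in> {1<..<x1}"
      then have "- y s > c" using left[of s] by (simp add: c_def)
      then show "- ln (- y s) = G s" by (simp add: G_def)
    qed
  qed
  have h0: "(\<lambda>x::real. 0::real) absolutely_integrable_on {1..x1}" by simp
  have "G x1 - G 1 \<le> integral {1..x1} (\<lambda>x. 0)"
    by (rule ac_bound[OF acG contG x1ab(1) Dsub Dneg derG h0]) (use q0 in auto)
  then have "G x1 - G 1 \<le> 0" by simp
  moreover have "G x1 = - ln c" using yx1 by (simp add: G_def c_def)
  moreover have "G 1 = - ln (- y 1)" using y1 by (simp add: G_def c_def)
  moreover have "ln c < 0" by (simp add: c_def)
  moreover have "0 \<le> ln (- y 1)" using y1 by simp
  ultimately show False by linarith
qed

lemma emeasure_Iic_inf: "emeasure lborel {..(a::real)} = \<infinity>"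
proof (rule ccontr)
  assume ne: "emeasure lborel {..a} \<noteq> \<infinity>"
  obtain r where r: "emeasure lborel {..a} = ennreal r" "r \<ge> 0"
    using ne by (cases "emeasure lborel {..a}" rule: ennreal_cases) auto
  have "emeasure lborel {a - (r+1)..a} \<le> emeasure lborel {..a}" by (rule emeasure_mono) auto
  then have "ennreal (r+1) \<le> ennreal r" using r by simp
  then show False using r by simp
qed

lemma emeasure_Ici_inf: "emeasure lborel {(a::real)..} = \<infinity>"
proof (rule ccontr)
  assume ne: "emeasure lborel {a..} \<noteq> \<infinity>"
  obtain r where r: "emeasure lborel {a..} = ennreal r" "r \<ge> 0"
    using ne by (cases "emeasure lborel {a..}" rule: ennreal_cases) auto
  have "emeasure lborel {a..a+(r+1)} \<le> emeasure lborel {a..}" by (rule emeasure_mono) auto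
  then have "ennreal (r+1) \<le> ennreal r" using r by simp
  then show False using r by simp
qed

theorem lemma2p2:
  fixes q :: "real \<Rightarrow> real" and p :: real
  assumes "\<And>x. 0 \<le> q x"
    and "locally_integrable q"
    and "1 \<le> p"
    and "correctly_solvable q p"
  shows "(\<integral>\<^sup>+ x. ennreal (q x) \<partial>lebesgue) = \<infinity>"
proof (rule ccontr)
  assume fin: "(\<integral>\<^sup>+ x. ennreal (q x) \<partial>lebesgue) \<noteq> \<infinity>"
  have q0: "\<And>x. 0 \<le> q x" using assms(1) .
  have qint: "\<And>a b. q absolutely_integrable_on {a..b}"
    using assms(2) unfolding locally_integrable_def by blast
  define K where "K = enn2real (\<integral>\<^sup>+ x. ennreal (q x) \<partial>lebesgue)"
  have Kb: "\<And>a b. integral {a..b} q \<le> K"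
    unfolding K_def using int_le_K[OF q0 qint fin] .
  have p0: "p > 0" using assms(3) by simp
  define f :: "real \<Rightarrow> real" where "f = indicator {0..1}"
  have fLp: "in_Lp p f"
    unfolding in_Lp_def
  proof
    show "f \<in> borel_measurable lebesgue" unfolding f_def by (rule borel_measurable_indicator) simp
    have "(\<lambda>x. \<bar>f x\<bar> powr p) = f" using p0 by (auto simp: f_def indicator_def)
    moreover have "integrable lebesgue f" unfolding f_def
      by (rule integrable_real_indicator) simp_all
    ultimately show "integrable lebesgue (\<lambda>x. \<bar>f x\<bar> powr p)" by simp
  qed
  obtain y where yLp: "in_Lp p y" and ysol: "is_solution q f y"
    using assms(4) fLp unfolding correctly_solvable_def by blast
  have ac: "abs_cont y" and AEy: "AE x in lebesgue. \<exists>d. (y has_real_derivative d) (at x) \<and> - d + q x * y x = f x"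
    using ysol unfolding is_solution_def by blast+
  define E where "E = {x. \<exists>d. (y has_real_derivative d) (at x) \<and> - d + q x * y x = f x}"
  have Eneg: "negligible {x. x \<notin> E}"
    using AE_negligible[OF AEy] by (simp add: E_def)
  have derE: "(y has_real_derivative deriv y x) (at x) \<and> - deriv y x + q x * y x = f x" if xE: "x \<in> E" for x
  proof -
    obtain d where d: "(y has_real_derivative d) (at x)" "- d + q x * y x = f x" using xE by (auto simp: E_def)
    then show ?thesis using DERIV_imp_deriv[OF d(1)] by simp
  qed
  have contY: "continuous_on UNIV y" using ac_cont_UNIV[OF ac] .
  have yint: "integrable lebesgue (\<lambda>x. \<bar>y x\<bar> powr p)" using yLp unfolding in_Lp_def by blast
  \<comment> \<open>Step 1: y 0 <= 0\<close>
  have y0: "y 0 \<le> 0"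
  proof (rule ccontr)
    assume "\<not> y 0 \<le> 0"
    then have y0p: "y 0 > 0" by simp
    define c0 where "c0 = y 0 * exp (- K) / 2"
    have c0p: "c0 > 0" using y0p by (simp add: c0_def)
    have bnd: "c0 \<le> \<bar>y x\<bar>" if x: "x \<in> {..0}" for x
    proof -
      define D where "D = E \<inter> {x<..<0}"
      have Dneg: "negligible ({x..0} - D)"
      proof -
        have "{x..0} - D \<subseteq> {x. x \<notin> E} \<union> {x, 0}" by (auto simp: D_def)
        moreover have "negligible ({x. x \<notin> E} \<union> {x, 0})" using Eneg by simp
        ultimately show ?thesis using negligible_subset by blast
      qed
      have der: "(y has_real_derivative deriv y t) (at t)" if "t \<in> D" for t
        using derE that by (auto simp: D_def)
      have dq: "deriv y t \<le> q t * y t" if "t \<in> D" "y t > 0" for t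
      proof -
        have "t < 0" "t \<in> E" using that by (auto simp: D_def)
        then have "f t = 0" by (simp add: f_def)
        then show ?thesis using derE[OF \<open>t \<in> E\<close>] by simp
      qed
      have "y x \<ge> y 0 * exp (- integral {x..0} q) / 2"
        by (rule log_lower[OF ac contY _ y0p _ Dneg der dq qint]) (use x q0 in \<open>auto simp: D_def\<close>)
      moreover have "exp (- K) \<le> exp (- integral {x..0} q)" using Kb[of x 0] by simp
      then have "c0 \<le> y 0 * exp (- integral {x..0} q) / 2"
        unfolding c0_def using y0p by (simp add: divide_right_mono)
      ultimately show ?thesis by linarith
    qed
    show False
      by (rule not_Lp[OF yint p0 c0p, of "{..0}"]) (simp_all add: bnd emeasure_Iic_inf emeasure_Ici_inf)
  qed
  \<comment> \<open>Step 2: y <= 0 on [0,1]\<close>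
  have ynp: "y t \<le> 0" if t: "t \<in> {0..1}" for t
  proof (rule ccontr)
    assume "\<not> y t \<le> 0"
    then have ytp: "y t > 0" by simp
    define D where "D = E \<inter> {0<..<t}"
    have Dneg: "negligible ({0..t} - D)"
    proof -
      have "{0..t} - D \<subseteq> {x. x \<notin> E} \<union> {0, t}" by (auto simp: D_def)
      moreover have "negligible ({x. x \<notin> E} \<union> {0, t})" using Eneg by simp
      ultimately show ?thesis using negligible_subset by blast
    qed
    have der: "(y has_real_derivative deriv y s) (at s)" if "s \<in> D" for s
      using derE that by (auto simp: D_def)
    have dq: "deriv y s \<le> q s * y s" if "s \<in> D" "y s > 0" for s
    proof -
      have "0 < s" "s < t" "s \<in> E" using that by (auto simp: D_def)
      then have "f s = 1" using t by (simp add: f_def)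
      then show ?thesis using derE[OF \<open>s \<in> E\<close>] by simp
    qed
    have "y 0 \<ge> y t * exp (- integral {0..t} q) / 2"
      by (rule log_lower[OF ac contY _ ytp _ Dneg der dq qint]) (use t q0 in \<open>auto simp: D_def\<close>)
    moreover have "y t * exp (- integral {0..t} q) / 2 > 0" using ytp by simp
    ultimately show False using y0 by linarith
  qed
  \<comment> \<open>Step 3: y 1 <= -1\<close>
  have y1: "y 1 \<le> -1"
  proof -
    define G where "G s = y s + s" for s
    have acG: "abs_cont_on 0 1 G"
      unfolding G_def using ac unfolding abs_cont_def by (intro ac_add_id) blast
    have contG: "continuous_on UNIV G"
      unfolding G_def by (intro continuous_intros contY)
    define D where "D = E \<inter> {0<..<1}"
    have Dneg: "negligible ({0..1} - D)"
    proof -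
      have "{0..1} - D \<subseteq> {x. x \<notin> E} \<union> {0, 1}" by (auto simp: D_def)
      moreover have "negligible ({x. x \<notin> E} \<union> {0, 1})" using Eneg by simp
      ultimately show ?thesis using negligible_subset by blast
    qed
    have derG: "(G has_real_derivative (deriv y s + 1)) (at s)" if "s \<in> D" for s
    proof -
      have "(y has_real_derivative deriv y s) (at s)" using derE that by (auto simp: D_def)
      then show ?thesis unfolding G_def by (intro derivative_intros) auto
    qed
    have hg: "deriv y s + 1 \<le> 0" if "s \<in> D" for s
    proof -
      have "0 < s" "s < 1" "s \<in> E" using that by (auto simp: D_def)
      then have "f s = 1" by (simp add: f_def)
      then have "deriv y s + 1 = q s * y s" using derE[OF \<open>s \<in> E\<close>] by simp
      moreover have "y s \<le> 0" using ynp \<open>0 < s\<close> \<open>s < 1\<close> by simp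
      ultimately show ?thesis using q0[of s] by (simp add: mult_nonneg_nonpos)
    qed
    have h0: "(\<lambda>x::real. 0::real) absolutely_integrable_on {0..1}" by simp
    have "G 1 - G 0 \<le> integral {0..1} (\<lambda>x. 0)"
    proof -
      have D1: "D \<subseteq> {0<..<1}" by (auto simp: D_def)
      show ?thesis using ac_bound[OF acG contG _ D1 Dneg derG h0 hg] by simp
    qed
    then have "y 1 + 1 - y 0 \<le> 0" by (simp add: G_def)
    then show ?thesis using y0 by linarith
  qed
  \<comment> \<open>Step 4: contradiction on [1,infinity)\<close>
  have bnd: "1/2 \<le> \<bar>y X\<bar>" if "X \<in> {1..}" for X
  proof -
    have "y X \<le> -1/2"
    proof (rule right_side[OF ac contY y1 Eneg _ q0])
      show "1 \<le> X" using that by simp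
      fix t assume t: "t \<in> E" "t > 1"
      then have "f t = 0" by (simp add: f_def)
      then show "(y has_real_derivative deriv y t) (at t) \<and> deriv y t = q t * y t"
        using derE[OF t(1)] by simp
    qed
    then show ?thesis by simp
  qed
  show False
  proof (rule not_Lp[OF yint p0, of "1/2" "{1..}"])
    show "0 < (1/2::real)" by simp
    show "{1::real..} \<in> sets lebesgue" by simp
    show "emeasure lebesgue {1::real..} = \<infinity>" by (simp add: emeasure_Ici_inf)
    show "\<And>x. x \<in> {1..} \<Longrightarrow> 1/2 \<le> \<bar>y x\<bar>" by (rule bnd)
  qed
qed

end
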